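(* Let $m\in\mathbb N$ and let $f:\mathbb R\to\mathbb R$ be a $2\pi$-periodic function of class $C^{m}$ with zero mean, $\int_0^{2\pi}f(t)\,dt=0$. Then: (a) $$0\le \sum_{k=0}^{m}\mathbf c_{m,k}\int_0^{2\pi}\big(f^{(k)}(t)\big)^2dt\le \frac{1}{(m+1)^2}\sum_{k=0}^{m}\mathbf c_{m,k}\int_0^{2\pi}\big(f^{(k+1)}(t)\big)^2dt.$$ (b) $$0\le \sum_{k=0}^{m-1}\lambda_{m,k}\int_0^{2\pi}\Big[\big(f^{(k+1)}\big)^2-\big(f^{(k)}\big)^2\Big]dt\le \frac{1}{(m+1)^2}\sum_{k=0}^{m-1}\lambda_{m,k}\int_0^{2\pi}\Big[\big(f^{(k+2)}\big)^2-\big(f^{(k+1)}\big)^2\Big]dt.$$ (c) $$0\le S_{m,0}\int_0^{2\pi}\big(\dot f^2-f^2\big)dt+\sum_{k=1}^{m-1}S_{m,k}\int_0^{2\pi}\big(f^{(k+1)}+f^{(k-1)}\big)^2dt$$ $$\le \frac{1}{(m+1)^2}\Big[S_{m,0}\int_0^{2\pi}\big(\dot f^2-f^2\big)dt+\sum_{k=0}^{m-1}S_{m,k}\int_0^{2\pi}\big(f^{(k+2)}+f^{(k)}\big)^2dt\Big].$$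
   Context: $\mathbf c_{m,k}$ are defined by $\prod_{j=1}^{m}(t-j^2)=\sum_{k=0}^m \mathbf c_{m,k}t^k$. $\lambda_{m,k}$ are defined by $P_m(t)=\sum_{k=0}^{m-1}\lambda_{m,k}t^k$ where $P_1(t)=1$ and $P_m(t)=\prod_{j=2}^m(t-j^2)$ for $m\ge2$. $S_{m,0}:=P_m(1)=\prod_{j=2}^m(1-j^2)$ and $S_{m,1},\dots,S_{m,m-1}$ are the coefficients of $\mathcal S_m(t)=\frac{P_m(t)-P_m(1)}{t-1}=\sum_{k=1}^{m-1}S_{m,k}t^{k-1}$. $f^{(k)}$ is the $k$-th derivative, $\dot f=f'$. *)

theory Defs
  imports "HOL-Analysis.Analysis" "HOL-Computational_Algebra.Polynomial"
begin

definition nderiv :: "nat \<Rightarrow> (real \<Rightarrow> real) \<Rightarrow> real \<Rightarrow> real" where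
  "nderiv k f = (deriv ^^ k) f"

definition C_class :: "nat \<Rightarrow> (real \<Rightarrow> real) \<Rightarrow> bool" where
  "C_class m f \<longleftrightarrow>
     (\<forall>k\<le>m. continuous_on UNIV (nderiv k f)) \<and>
     (\<forall>k<m. \<forall>x. nderiv k f differentiable (at x))"

definition cpoly :: "nat \<Rightarrow> real poly" where
  "cpoly m = (\<Prod>j\<in>{1..m}. [:- ((real j)^2), 1:])"

definition cc :: "nat \<Rightarrow> nat \<Rightarrow> real" where
  "cc m k = coeff (cpoly m) k"

definition Ppoly :: "nat \<Rightarrow> real poly" where
  "Ppoly m = (\<Prod>j\<in>{2..m}. [:- ((real j)^2), 1:])"

definition lam :: "nat \<Rightarrow> nat \<Rightarrow> real" where
  "lam m k = coeff (Ppoly m) k"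

definition Spoly :: "nat \<Rightarrow> real poly" where
  "Spoly m = (Ppoly m - [:poly (Ppoly m) 1:]) div [:-1, 1:]"

definition SS :: "nat \<Rightarrow> nat \<Rightarrow> real" where
  "SS m k = (if k = 0 then poly (Ppoly m) 1 else coeff (Spoly m) (k - 1))"

end

theory Submission
  imports Defs
begin

abbreviation L :: "real set" where "L \<equiv> {0..2*pi}"

lemma ftc_real:
  fixes F F' :: "real \<Rightarrow> real"
  assumes "a \<le> b" "\<And>x. (F has_real_derivative F' x) (at x)"
  shows "integral {a..b} F' = F b - F a"
proof -
  have "(F' has_integral (F b - F a)) {a..b}"
    apply (rule fundamental_theorem_of_calculus[OF assms(1)])
    using assms(2) by (simp add: has_real_derivative_iff_has_vector_derivative has_vector_derivative_at_within)
  then show ?thesis by (rule integral_unique)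
qed

lemma intL: "continuous_on UNIV (g::real\<Rightarrow>real) \<Longrightarrow> g integrable_on L"
proof -
  assume "continuous_on UNIV g"
  then have "continuous_on L g" by (rule continuous_on_subset) simp
  then show ?thesis by (rule integrable_continuous_interval)
qed

lemma int_cos_int: "integral L (\<lambda>t. cos (real_of_int z * t)) = (if z = 0 then 2*pi else 0)"
proof (cases "z = 0")
  case True then show ?thesis by simp
next
  case False
  have "integral L (\<lambda>t. cos (real_of_int z * t)) = sin (real_of_int z * (2*pi)) / real_of_int z - sin (real_of_int z * 0) / real_of_int z"
    apply (rule ftc_real)
     apply simp
    using False by (auto intro!: derivative_eq_intros)
  also have "\<dots> = 0" using sin_int_2pin[of z] cos_int_2pin[of z] by (simp add: mult.commute)
  finally show ?thesis using False by simp
qed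

lemma int_sin_int: "integral L (\<lambda>t. sin (real_of_int z * t)) = 0"
proof (cases "z = 0")
  case True then show ?thesis by simp
next
  case False
  have "integral L (\<lambda>t. sin (real_of_int z * t)) = - cos (real_of_int z * (2*pi)) / real_of_int z - (- cos (real_of_int z * 0) / real_of_int z)"
    apply (rule ftc_real)
     apply simp
    using False by (auto intro!: derivative_eq_intros)
  also have "\<dots> = 0" using sin_int_2pin[of z] cos_int_2pin[of z] by (simp add: mult.commute)
  finally show ?thesis by simp
qed

lemma int_comb: "integral L (\<lambda>t. u * cos (real_of_int x * t) + v * cos (real_of_int y * t)) =
   u * integral L (\<lambda>t. cos (real_of_int x * t)) + v * integral L (\<lambda>t. cos (real_of_int y * t))"
  by (subst integral_add) (auto intro!: intL continuous_intros)

lemma int_combs: "integral L (\<lambda>t. u * sin (real_of_int x * t) + v * sin (real_of_int y * t)) =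
   u * integral L (\<lambda>t. sin (real_of_int x * t)) + v * integral L (\<lambda>t. sin (real_of_int y * t))"
  by (subst integral_add) (auto intro!: intL continuous_intros)

lemma int_cc: "integral L (\<lambda>t. cos (real a * t) * cos (real b * t)) =
   (if a = b then (if a = 0 then 2*pi else pi) else 0)"
proof -
  have e: "(\<lambda>t. cos (real a * t) * cos (real b * t)) =
     (\<lambda>t. (1/2) * cos (real_of_int (int a - int b) * t) + (1/2) * cos (real_of_int (int a + int b) * t))"
  proof
    fix t show "cos (real a * t) * cos (real b * t) = (1/2) * cos (real_of_int (int a - int b) * t) + (1/2) * cos (real_of_int (int a + int b) * t)"
      using cos_times_cos[of "real a * t" "real b * t"] by (simp add: left_diff_distrib distrib_right)
  qed
  show ?thesis unfolding e int_comb int_cos_int by auto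
qed

lemma int_ss: "integral L (\<lambda>t. sin (real a * t) * sin (real b * t)) =
   (if a = b \<and> a \<noteq> 0 then pi else 0)"
proof -
  have e: "(\<lambda>t. sin (real a * t) * sin (real b * t)) =
     (\<lambda>t. (1/2) * cos (real_of_int (int a - int b) * t) + (-1/2) * cos (real_of_int (int a + int b) * t))"
  proof
    fix t show "sin (real a * t) * sin (real b * t) = (1/2) * cos (real_of_int (int a - int b) * t) + (-1/2) * cos (real_of_int (int a + int b) * t)"
      using sin_times_sin[of "real a * t" "real b * t"] by (simp add: left_diff_distrib distrib_right)
  qed
  show ?thesis unfolding e int_comb int_cos_int by auto
qed

lemma int_cs: "integral L (\<lambda>t. cos (real a * t) * sin (real b * t)) = 0"
proof -
  have e: "(\<lambda>t. cos (real a * t) * sin (real b * t)) =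
     (\<lambda>t. (1/2) * sin (real_of_int (int a + int b) * t) + (-1/2) * sin (real_of_int (int a - int b) * t))"
  proof
    fix t show "cos (real a * t) * sin (real b * t) = (1/2) * sin (real_of_int (int a + int b) * t) + (-1/2) * sin (real_of_int (int a - int b) * t)"
      using cos_times_sin[of "real a * t" "real b * t"] by (simp add: left_diff_distrib distrib_right)
  qed
  show ?thesis unfolding e int_combs int_sin_int by auto
qed

definition Ac :: "nat \<Rightarrow> (real \<Rightarrow> real) \<Rightarrow> real" where
  "Ac n h = integral L (\<lambda>t. h t * cos (real n * t))"
definition Bs :: "nat \<Rightarrow> (real \<Rightarrow> real) \<Rightarrow> real" where
  "Bs n h = integral L (\<lambda>t. h t * sin (real n * t))"
definition en :: "nat \<Rightarrow> (real \<Rightarrow> real) \<Rightarrow> real" where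
  "en n h = (Ac n h)^2 + (Bs n h)^2"

definition tsum :: "nat \<Rightarrow> (nat \<Rightarrow> real) \<Rightarrow> (nat \<Rightarrow> real) \<Rightarrow> real \<Rightarrow> real" where
  "tsum N \<alpha> \<beta> t = (\<Sum>n<N. \<alpha> n * cos (real n * t) + \<beta> n * sin (real n * t))"

lemma cont_tsum: "continuous_on UNIV (tsum N \<alpha> \<beta>)"
  unfolding tsum_def by (intro continuous_intros)

lemma int_lin4:
  fixes p q r s :: "real \<Rightarrow> real"
  assumes "continuous_on UNIV p" "continuous_on UNIV q" "continuous_on UNIV r" "continuous_on UNIV s"
  shows "integral L (\<lambda>t. a * p t + b * q t + c * r t + d * s t) =
    a * integral L p + b * integral L q + c * integral L r + d * integral L s"
proof -
  have i: "p integrable_on L" "q integrable_on L" "r integrable_on L" "s integrable_on L"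
    using assms by (auto intro: intL)
  have j: "(\<lambda>t. a * p t) integrable_on L" "(\<lambda>t. b * q t) integrable_on L"
    "(\<lambda>t. c * r t) integrable_on L" "(\<lambda>t. d * s t) integrable_on L"
    using i by (auto intro: integrable_on_mult_right)
  show ?thesis using j
    by (simp add: integral_add integrable_add)
qed

definition wt :: "(nat \<Rightarrow> real) \<Rightarrow> (nat \<Rightarrow> real) \<Rightarrow> nat \<Rightarrow> real" where
  "wt \<alpha> \<beta> i = \<alpha> i ^2 * (if i = 0 then 2*pi else pi) + \<beta> i ^2 * (if i = 0 then 0 else pi)"

lemma int_gg: "integral L (\<lambda>t. (\<alpha> i * cos (real i * t) + \<beta> i * sin (real i * t)) *
      (\<alpha> j * cos (real j * t) + \<beta> j * sin (real j * t))) =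
   (if i = j then wt \<alpha> \<beta> i else 0)"
proof -
  have e: "(\<lambda>t. (\<alpha> i * cos (real i * t) + \<beta> i * sin (real i * t)) *
      (\<alpha> j * cos (real j * t) + \<beta> j * sin (real j * t))) =
    (\<lambda>t. (\<alpha> i * \<alpha> j) * (cos (real i * t) * cos (real j * t)) + (\<alpha> i * \<beta> j) * (cos (real i * t) * sin (real j * t))
      + (\<beta> i * \<alpha> j) * (cos (real j * t) * sin (real i * t)) + (\<beta> i * \<beta> j) * (sin (real i * t) * sin (real j * t)))"
    by (rule ext) (simp add: algebra_simps)
  show ?thesis unfolding e
    by (subst int_lin4) (auto intro!: continuous_intros simp: int_cc int_cs int_ss power2_eq_square wt_def)
qed

lemma int_tsum_sq: "integral L (\<lambda>t. (tsum N \<alpha> \<beta> t)^2) =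
   (\<Sum>n<N. \<alpha> n ^2 * (if n = 0 then 2*pi else pi) + \<beta> n ^2 * (if n = 0 then 0 else pi))"
proof -
  let ?g = "\<lambda>i t. \<alpha> i * cos (real i * t) + \<beta> i * sin (real i * t)"
  have e: "(\<lambda>t. (tsum N \<alpha> \<beta> t)^2) = (\<lambda>t. \<Sum>i<N. \<Sum>j<N. ?g i t * ?g j t)"
    by (rule ext) (simp add: tsum_def power2_eq_square sum_product)
  have "integral L (\<lambda>t. \<Sum>i<N. \<Sum>j<N. ?g i t * ?g j t) = (\<Sum>i<N. \<Sum>j<N. integral L (\<lambda>t. ?g i t * ?g j t))"
    by (subst integral_sum, simp, rule integrable_sum, simp, (auto intro!: intL continuous_intros)[1])
       (subst integral_sum, auto intro!: intL continuous_intros)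
  also have "\<dots> = (\<Sum>n<N. \<alpha> n ^2 * (if n = 0 then 2*pi else pi) + \<beta> n ^2 * (if n = 0 then 0 else pi))"
    unfolding int_gg by (simp only: sum.delta' finite_lessThan) (simp add: wt_def)
  finally show ?thesis unfolding e .
qed

lemma int_h_tsum:
  assumes h: "continuous_on UNIV h"
  shows "integral L (\<lambda>t. h t * tsum N \<alpha> \<beta> t) = (\<Sum>n<N. \<alpha> n * Ac n h + \<beta> n * Bs n h)"
proof -
  have e: "(\<lambda>t. h t * tsum N \<alpha> \<beta> t) = (\<lambda>t. \<Sum>n<N. \<alpha> n * (h t * cos (real n * t)) + \<beta> n * (h t * sin (real n * t)))"
    by (rule ext) (simp add: tsum_def sum_distrib_left algebra_simps)
  show ?thesis unfolding e Ac_def Bs_def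
    using h by (subst integral_sum, simp, (auto intro!: intL continuous_intros)[1])
       (rule sum.cong, simp, subst integral_add, (auto intro!: intL continuous_intros)[2], simp)
qed

lemma int_sq_diff:
  assumes h: "continuous_on UNIV h"
  shows "integral L (\<lambda>t. (h t - tsum N \<alpha> \<beta> t)^2) = integral L (\<lambda>t. (h t)^2)
    + (\<Sum>n<N. - 2 * (\<alpha> n * Ac n h + \<beta> n * Bs n h) + \<alpha> n ^2 * (if n = 0 then 2*pi else pi) + \<beta> n ^2 * (if n = 0 then 0 else pi))"
proof -
  have c: "continuous_on UNIV (tsum N \<alpha> \<beta>)" by (rule cont_tsum)
  have e: "(\<lambda>t. (h t - tsum N \<alpha> \<beta> t)^2) = (\<lambda>t. 1 * (h t)^2 + (-2) * (h t * tsum N \<alpha> \<beta> t) + 1 * (tsum N \<alpha> \<beta> t)^2 + 0 * 0)"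
    by (rule ext) (simp add: power2_eq_square algebra_simps)
  have "integral L (\<lambda>t. (h t - tsum N \<alpha> \<beta> t)^2) = 1 * integral L (\<lambda>t. (h t)^2) + (-2) * integral L (\<lambda>t. h t * tsum N \<alpha> \<beta> t)
     + 1 * integral L (\<lambda>t. (tsum N \<alpha> \<beta> t)^2) + 0 * integral L (\<lambda>t. 0)"
    unfolding e by (rule int_lin4) (use h c in \<open>auto intro!: continuous_intros\<close>)
  also have "\<dots> = integral L (\<lambda>t. (h t)^2) + (-2) * (\<Sum>n<N. \<alpha> n * Ac n h + \<beta> n * Bs n h)
     + (\<Sum>n<N. \<alpha> n ^2 * (if n = 0 then 2*pi else pi) + \<beta> n ^2 * (if n = 0 then 0 else pi))"
    unfolding int_h_tsum[OF h] int_tsum_sq by simp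
  finally show ?thesis by (simp add: sum.distrib sum_distrib_left sum_subtractf sum_negf)
qed

lemma Ac0: "Ac 0 h = integral L h" by (simp add: Ac_def)
lemma Bs0: "Bs 0 h = 0" by (simp add: Bs_def)
lemma en_nonneg: "en n h \<ge> 0" by (simp add: en_def)

lemma approx_lb:
  assumes h: "continuous_on UNIV h" and h0: "integral L h = 0"
  shows "integral L (\<lambda>t. (h t)^2) - (\<Sum>n<N. en n h / pi) \<le> integral L (\<lambda>t. (h t - tsum N \<alpha> \<beta> t)^2)"
proof -
  have "- (en n h / pi) \<le> - 2 * (\<alpha> n * Ac n h + \<beta> n * Bs n h) + \<alpha> n ^2 * (if n = 0 then 2*pi else pi) + \<beta> n ^2 * (if n = 0 then 0 else pi)" for n
  proof (cases "n = 0")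
    case True then show ?thesis using h0 by (simp add: Ac0 Bs0 en_def)
  next
    case False
    have "0 \<le> (pi * \<alpha> n - Ac n h)^2 / pi + (pi * \<beta> n - Bs n h)^2 / pi" by simp
    also have "\<dots> = - 2 * (\<alpha> n * Ac n h + \<beta> n * Bs n h) + \<alpha> n ^2 * pi + \<beta> n ^2 * pi + en n h / pi"
      by (simp add: en_def power2_eq_square field_simps)
    finally show ?thesis using False by simp
  qed
  then have "(\<Sum>n<N. - (en n h / pi)) \<le> (\<Sum>n<N. - 2 * (\<alpha> n * Ac n h + \<beta> n * Bs n h) + \<alpha> n ^2 * (if n = 0 then 2*pi else pi) + \<beta> n ^2 * (if n = 0 then 0 else pi))"
    by (rule sum_mono)
  then show ?thesis unfolding int_sq_diff[OF h] by (simp add: sum_negf)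
qed

lemma bessel:
  assumes h: "continuous_on UNIV h" and h0: "integral L h = 0"
  shows "(\<Sum>n<N. en n h / pi) \<le> integral L (\<lambda>t. (h t)^2)"
proof -
  let ?\<alpha> = "\<lambda>n. Ac n h / pi" and ?\<beta> = "\<lambda>n. Bs n h / pi"
  have t: "- 2 * (?\<alpha> n * Ac n h + ?\<beta> n * Bs n h) + ?\<alpha> n ^2 * (if n = 0 then 2*pi else pi) + ?\<beta> n ^2 * (if n = 0 then 0 else pi)
     = - (en n h / pi)" for n
  proof (cases "n = 0")
    case True then show ?thesis using h0 by (simp add: Ac0 Bs0 en_def)
  next
    case False then show ?thesis by (simp add: en_def power2_eq_square field_simps)
  qed
  have "0 \<le> integral L (\<lambda>t. (h t - tsum N ?\<alpha> ?\<beta> t)^2)"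
    by (rule integral_nonneg) (auto intro!: intL continuous_intros h cont_tsum)
  also have "\<dots> = integral L (\<lambda>t. (h t)^2) - (\<Sum>n<N. en n h / pi)"
    unfolding int_sq_diff[OF h] t by (simp add: sum_negf)
  finally show ?thesis by simp
qed

lemma parseval_dens:
  assumes h: "continuous_on UNIV h" and h0: "integral L h = 0"
    and dens: "\<And>e. e > 0 \<Longrightarrow> \<exists>N \<alpha> \<beta>. \<forall>t\<in>L. \<bar>h t - tsum N \<alpha> \<beta> t\<bar> \<le> e"
  shows "(\<lambda>n. en n h / pi) sums integral L (\<lambda>t. (h t)^2)"
  unfolding sums_def
proof (rule LIMSEQ_I)
  fix r :: real assume r: "0 < r"
  define e where "e = min 1 (r / (4*pi))"
  have e0: "e > 0" using r by (simp add: e_def)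
  have e1: "e \<le> 1" by (simp add: e_def)
  have "e^2 \<le> e" using e0 e1 by (simp add: power2_eq_square mult_left_le)
  also have "e \<le> r / (4*pi)" by (simp add: e_def)
  finally have er: "2 * pi * e^2 < r" using r pi_gt_zero by (simp add: field_simps)
  obtain N \<alpha> \<beta> where a: "\<forall>t\<in>L. \<bar>h t - tsum N \<alpha> \<beta> t\<bar> \<le> e" using dens[OF e0] by blast
  have "integral L (\<lambda>t. (h t - tsum N \<alpha> \<beta> t)^2) \<le> integral L (\<lambda>t. e^2)"
  proof (rule integral_le)
    show "(\<lambda>t. (h t - tsum N \<alpha> \<beta> t)^2) integrable_on L"
      by (auto intro!: intL continuous_intros h cont_tsum)
    show "(\<lambda>t. e^2) integrable_on L" by (rule intL) (rule continuous_on_const)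
    fix t assume "t \<in> L"
    then have "\<bar>h t - tsum N \<alpha> \<beta> t\<bar> \<le> e" using a by blast
    then show "(h t - tsum N \<alpha> \<beta> t)^2 \<le> e^2"
      using abs_le_square_iff[of "h t - tsum N \<alpha> \<beta> t" e] e0 by simp
  qed
  also have "\<dots> = 2 * pi * e^2" by simp
  finally have b: "integral L (\<lambda>t. (h t)^2) - (\<Sum>n<N. en n h / pi) < r"
    using approx_lb[OF h h0, of N \<alpha> \<beta>] er by linarith
  show "\<exists>no. \<forall>n\<ge>no. norm ((\<Sum>k<n. en k h / pi) - integral L (\<lambda>t. (h t)^2)) < r"
  proof (intro exI allI impI)
    fix n assume "N \<le> n"
    then have "(\<Sum>k<N. en k h / pi) \<le> (\<Sum>k<n. en k h / pi)"
      by (intro sum_mono2) (auto simp: en_nonneg)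
    then show "norm ((\<Sum>k<n. en k h / pi) - integral L (\<lambda>t. (h t)^2)) < r"
      using b bessel[OF h h0, of n] by simp
  qed
qed

inductive tp :: "(real \<Rightarrow> real) \<Rightarrow> bool" where
  tcos: "tp (\<lambda>t. cos (real n * t))"
| tsin: "tp (\<lambda>t. sin (real n * t))"
| tscale: "tp T \<Longrightarrow> tp (\<lambda>t. c * T t)"
| tadd: "tp T \<Longrightarrow> tp U \<Longrightarrow> tp (\<lambda>t. T t + U t)"

lemma tp_eq: "tp T \<Longrightarrow> (\<And>t. T t = U t) \<Longrightarrow> tp U"
proof -
  assume "tp T" "\<And>t. T t = U t"
  moreover have "T = U" using \<open>\<And>t. T t = U t\<close> by (rule ext)
  ultimately show ?thesis by simp
qed

lemma tp_cos_diff: "tp (\<lambda>t. cos ((real a - real b) * t))"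
proof (cases "b \<le> a")
  case True
  then show ?thesis by (rule_tac tp_eq[OF tcos[of "a - b"]]) (simp add: of_nat_diff)
next
  case False
  then show ?thesis 
    by (rule_tac tp_eq[OF tcos[of "b - a"]]) (metis cos_minus minus_diff_eq minus_mult_left of_nat_diff nat_le_linear)
qed

lemma tp_sin_diff: "tp (\<lambda>t. sin ((real a - real b) * t))"
proof (cases "b \<le> a")
  case True
  then show ?thesis by (rule_tac tp_eq[OF tsin[of "a - b"]]) (simp add: of_nat_diff)
next
  case False
  have "tp (\<lambda>t. (-1) * sin (real (b - a) * t))" by (rule tscale, rule tsin)
  moreover have "(-1) * sin (real (b - a) * t) = sin ((real a - real b) * t)" for t
  proof -
    have "real (b - a) * t = - ((real a - real b) * t)" using False by (simp add: of_nat_diff algebra_simps)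
    then show ?thesis by (simp only: sin_minus)
  qed
  ultimately show ?thesis by (rule tp_eq)
qed

lemma tp_cos_sum: "tp (\<lambda>t. cos ((real a + real b) * t))"
  by (rule tp_eq[OF tcos[of "a + b"]]) simp
lemma tp_sin_sum: "tp (\<lambda>t. sin ((real a + real b) * t))"
  by (rule tp_eq[OF tsin[of "a + b"]]) simp

lemma tp_lin2: "tp T \<Longrightarrow> tp U \<Longrightarrow> tp (\<lambda>t. c * T t + d * U t)"
  by (intro tadd tscale)

lemma tp_cc: "tp (\<lambda>t. cos (real a * t) * cos (real b * t))"
  by (rule tp_eq[OF tp_lin2[OF tp_cos_diff[of a b] tp_cos_sum[of a b], of "1/2" "1/2"]])
     (simp add: cos_times_cos left_diff_distrib distrib_right)
lemma tp_ss: "tp (\<lambda>t. sin (real a * t) * sin (real b * t))"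
  by (rule tp_eq[OF tp_lin2[OF tp_cos_diff[of a b] tp_cos_sum[of a b], of "1/2" "-1/2"]])
     (simp add: sin_times_sin left_diff_distrib distrib_right)
lemma tp_cs: "tp (\<lambda>t. cos (real a * t) * sin (real b * t))"
  by (rule tp_eq[OF tp_lin2[OF tp_sin_sum[of a b] tp_sin_diff[of a b], of "1/2" "-1/2"]])
     (simp add: cos_times_sin left_diff_distrib distrib_right)
lemma tp_sc: "tp (\<lambda>t. sin (real a * t) * cos (real b * t))"
  by (rule tp_eq[OF tp_lin2[OF tp_sin_sum[of a b] tp_sin_diff[of a b], of "1/2" "1/2"]])
     (simp add: sin_times_cos left_diff_distrib distrib_right)

lemma tp_mult_base:
  assumes "tp U"
  shows "tp (\<lambda>t. cos (real a * t) * U t) \<and> tp (\<lambda>t. sin (real a * t) * U t)"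
  using assms
proof induction
  case (tcos n) then show ?case using tp_cc tp_sc by blast
next
  case (tsin n) then show ?case using tp_cs tp_ss by blast
next
  case (tscale T c)
  have 1: "tp (\<lambda>t. c * (cos (real a * t) * T t))" using tscale.IH by (intro tp.tscale) blast
  have 2: "tp (\<lambda>t. c * (sin (real a * t) * T t))" using tscale.IH by (intro tp.tscale) blast
  show ?case
    by (rule conjI; rule tp_eq[OF 1] tp_eq[OF 2]; simp)
next
  case (tadd T U)
  have 1: "tp (\<lambda>t. cos (real a * t) * T t + cos (real a * t) * U t)" using tadd.IH by (intro tp.tadd) blast+
  have 2: "tp (\<lambda>t. sin (real a * t) * T t + sin (real a * t) * U t)" using tadd.IH by (intro tp.tadd) blast+
  show ?case
    by (rule conjI; rule tp_eq[OF 1] tp_eq[OF 2]; simp add: distrib_left)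
qed

lemma tp_mult:
  assumes "tp T" "tp U"
  shows "tp (\<lambda>t. T t * U t)"
  using assms(1)
proof induction
  case (tcos n) then show ?case using tp_mult_base[OF assms(2)] by blast
next
  case (tsin n) then show ?case using tp_mult_base[OF assms(2)] by blast
next
  case (tscale T c)
  have 1: "tp (\<lambda>t. c * (T t * U t))" using tscale.IH by (intro tp.tscale)
  show ?case by (rule tp_eq[OF 1]) simp
next
  case (tadd T1 T2)
  have 1: "tp (\<lambda>t. T1 t * U t + T2 t * U t)" using tadd.IH by (intro tp.tadd)
  show ?case by (rule tp_eq[OF 1]) (simp add: distrib_right)
qed

lemma tsum_pad: "tsum N \<alpha> \<beta> t = tsum (N + M) (\<lambda>k. if k < N then \<alpha> k else 0) (\<lambda>k. if k < N then \<beta> k else 0) t"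
  by (induction M) (auto simp: tsum_def)

lemma tsum_add: "tsum N \<alpha> \<beta> t + tsum N \<alpha>' \<beta>' t = tsum N (\<lambda>k. \<alpha> k + \<alpha>' k) (\<lambda>k. \<beta> k + \<beta>' k) t"
  by (simp add: tsum_def sum.distrib[symmetric] algebra_simps)

lemma tsum_scale: "c * tsum N \<alpha> \<beta> t = tsum N (\<lambda>k. c * \<alpha> k) (\<lambda>k. c * \<beta> k) t"
  by (simp add: tsum_def sum_distrib_left algebra_simps)

lemma tsum_single: "tsum (Suc n) (\<lambda>k. if k = n then a else 0) (\<lambda>k. if k = n then b else 0) t = a * cos (real n * t) + b * sin (real n * t)"
  by (simp add: tsum_def)

lemma tp_explicit: "tp T \<Longrightarrow> \<exists>N \<alpha> \<beta>. \<forall>t. T t = tsum N \<alpha> \<beta> t"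
proof (induction rule: tp.induct)
  case (tcos n)
  show ?case by (rule exI[of _ "Suc n"], rule exI[of _ "\<lambda>k. if k = n then 1 else 0"],
      rule exI[of _ "\<lambda>k. if k = n then 0 else 0"]) (simp only: tsum_single, simp)
next
  case (tsin n)
  show ?case by (rule exI[of _ "Suc n"], rule exI[of _ "\<lambda>k. if k = n then 0 else 0"],
      rule exI[of _ "\<lambda>k. if k = n then 1 else 0"]) (simp only: tsum_single, simp)
next
  case (tscale T c)
  then obtain N \<alpha> \<beta> where "\<forall>t. T t = tsum N \<alpha> \<beta> t" by blast
  then show ?case by (intro exI[of _ N] exI[of _ "\<lambda>k. c * \<alpha> k"] exI[of _ "\<lambda>k. c * \<beta> k"]) (simp add: tsum_scale)
next
  case (tadd T U)
  then obtain N \<alpha> \<beta> M \<alpha>' \<beta>' where a: "\<forall>t. T t = tsum N \<alpha> \<beta> t" "\<forall>t. U t = tsum M \<alpha>' \<beta>' t" by blast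
  have "T t + U t = tsum (N + M) (\<lambda>k. (if k < N then \<alpha> k else 0) + (if k < M then \<alpha>' k else 0))
       (\<lambda>k. (if k < N then \<beta> k else 0) + (if k < M then \<beta>' k else 0)) t" for t
  proof -
    have "T t + U t = tsum N \<alpha> \<beta> t + tsum M \<alpha>' \<beta>' t" using a by simp
    also have "\<dots> = tsum (N + M) (\<lambda>k. if k < N then \<alpha> k else 0) (\<lambda>k. if k < N then \<beta> k else 0) t
       + tsum (N + M) (\<lambda>k. if k < M then \<alpha>' k else 0) (\<lambda>k. if k < M then \<beta>' k else 0) t"
      using tsum_pad[of N \<alpha> \<beta> t M] tsum_pad[of M \<alpha>' \<beta>' t N] by (simp add: add.commute)
    finally show ?thesis by (simp add: tsum_add)
  qed
  then show ?case by blast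
qed

lemma tp_rpf:
  fixes g :: "complex \<Rightarrow> real"
  assumes "real_polynomial_function g"
  shows "tp (\<lambda>t. g (cis t))"
  using assms
proof induction
  case (linear g)
  then have lg: "linear g" by (rule bounded_linear.linear)
  have gz: "g z = Re z * g 1 + Im z * g \<i>" for z
  proof -
    have "z = Re z *\<^sub>R 1 + Im z *\<^sub>R \<i>" by (simp add: complex_eq_iff)
    then have "g z = g (Re z *\<^sub>R 1 + Im z *\<^sub>R \<i>)" by simp
    also have "\<dots> = Re z * g 1 + Im z * g \<i>"
      using lg by (simp add: linear_add linear_scale)
    finally show ?thesis .
  qed
  have e: "g (cis t) = g 1 * cos (real 1 * t) + g \<i> * sin (real 1 * t)" for t
    using gz[of "cis t"] by (simp only: cis.sel) (simp add: mult.commute)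
  show ?case by (rule tp_eq[OF tp.tadd[OF tp.tscale[OF tp.tcos] tp.tscale[OF tp.tsin]]]) (simp only: e)
next
  case (const c)
  show ?case by (rule tp_eq[OF tp.tscale[OF tp.tcos[of 0], where c=c]]) simp
next
  case (add f g)
  show ?case by (rule tp.tadd[OF add.IH])
next
  case (mult f g)
  show ?case by (rule tp_mult[OF mult.IH])
qed

lemma per_nat:
  assumes p: "\<forall>t. h (t + 2*pi) = h t"
  shows "h (t + real n * (2*pi)) = h t"
proof (induction n)
  case 0 then show ?case by simp
next
  case (Suc n)
  have e: "t + real (Suc n) * (2*pi) = (t + real n * (2*pi)) + 2*pi" by (simp add: algebra_simps)
  have "h (t + real (Suc n) * (2*pi)) = h ((t + real n * (2*pi)) + 2*pi)" by (simp only: e)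
  also have "\<dots> = h (t + real n * (2*pi))" by (rule p[rule_format])
  also have "\<dots> = h t" by (rule Suc)
  finally show ?case .
qed

lemma per_int:
  assumes p: "\<forall>t. h (t + 2*pi) = h t"
  shows "h (t + real_of_int k * (2*pi)) = h t"
proof (cases "k \<ge> 0")
  case True
  then obtain n where n: "k = int n" using nonneg_int_cases by blast
  then show ?thesis using per_nat[OF p, of t n] by simp
next
  case False
  then have "k = - int (nat (-k))" by simp
  then obtain n where n: "k = - int n" by blast
  have e: "t = (t + real_of_int k * (2*pi)) + real n * (2*pi)" using n by (simp add: algebra_simps)
  have "h t = h ((t + real_of_int k * (2*pi)) + real n * (2*pi))" using e by (rule arg_cong[where f=h])
  also have "\<dots> = h (t + real_of_int k * (2*pi))" by (rule per_nat[OF p])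
  finally show ?thesis by (rule sym)
qed

lemma h_Arg2pi_Arg:
  assumes p: "\<forall>t. h (t + 2*pi) = h t"
  shows "h (Arg2pi z) = h (Arg z)"
proof (cases "z = 0")
  case True then show ?thesis by (simp add: Arg_def)
next
  case False
  have "is_Arg (exp (Ln z)) (Arg2pi z)" using False Arg2pi[of z] by simp
  then obtain k where k: "Im (Ln z) - real_of_int k * (2*pi) = Arg2pi z"
    using is_Arg_exp_diff_2pi by blast
  have "h (Arg2pi z) = h (Im (Ln z) + real_of_int (-k) * (2*pi))" using k by simp
  also have "\<dots> = h (Im (Ln z))" by (rule per_int[OF p])
  finally show ?thesis using False by (simp add: Arg_def)
qed

lemma h_cis:
  assumes p: "\<forall>t. h (t + 2*pi) = h t"
  shows "h (Arg2pi (cis t)) = h t"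
proof -
  have "is_Arg (exp (\<i> * of_real t)) (Arg2pi (cis t))" using Arg2pi[of "cis t"] by (simp add: cis_conv_exp)
  then obtain k where k: "Im (\<i> * of_real t) - real_of_int k * (2*pi) = Arg2pi (cis t)"
    using is_Arg_exp_diff_2pi by blast
  have "h (Arg2pi (cis t)) = h (t + real_of_int (-k) * (2*pi))" using k by simp
  also have "\<dots> = h t" by (rule per_int[OF p])
  finally show ?thesis .
qed

lemma cont_F:
  assumes h: "continuous_on UNIV h" and p: "\<forall>t. h (t + 2*pi) = h t"
  shows "continuous_on (sphere 0 1) (\<lambda>z. h (Arg2pi z))"
proof (rule continuous_at_imp_continuous_on, intro ballI)
  fix z :: complex assume z: "z \<in> sphere 0 1"
  have hc: "isCont h x" for x using h by (simp add: continuous_on_eq_continuous_at)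
  show "isCont (\<lambda>z. h (Arg2pi z)) z"
  proof (cases "z \<in> \<real>\<^sub>\<ge>\<^sub>0")
    case False
    then have "isCont Arg2pi z" by (rule continuous_at_Arg2pi)
    then show ?thesis using hc by (rule continuous_at_compose[unfolded o_def])
  next
    case True
    moreover have "z \<noteq> 0" using z by auto
    ultimately have "z \<notin> \<real>\<^sub>\<le>\<^sub>0" by (auto simp: complex_nonneg_Reals_iff complex_nonpos_Reals_iff complex_eq_iff)
    then have "isCont Arg z" by (rule continuous_at_Arg)
    then have "isCont (\<lambda>z. h (Arg z)) z" using hc by (rule continuous_at_compose[unfolded o_def])
    moreover have "(\<lambda>z. h (Arg2pi z)) = (\<lambda>z. h (Arg z))" using h_Arg2pi_Arg[OF p] by (rule ext)
    ultimately show ?thesis by simp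
  qed
qed

lemma density:
  assumes h: "continuous_on UNIV h" and p: "\<forall>t. h (t + 2*pi) = h t" and e: "e > 0"
  shows "\<exists>N \<alpha> \<beta>. \<forall>t\<in>L. \<bar>h t - tsum N \<alpha> \<beta> t\<bar> \<le> e"
proof -
  obtain g where g: "real_polynomial_function g" "\<And>z. z \<in> sphere 0 1 \<Longrightarrow> \<bar>h (Arg2pi z) - g z\<bar> < e"
    using Stone_Weierstrass_real_polynomial_function[OF compact_sphere cont_F[OF h p] e] by blast
  obtain N \<alpha> \<beta> where T: "\<forall>t. g (cis t) = tsum N \<alpha> \<beta> t" using tp_explicit[OF tp_rpf[OF g(1)]] by blast
  have "\<bar>h t - tsum N \<alpha> \<beta> t\<bar> \<le> e" for t
    using g(2)[of "cis t"] h_cis[OF p, of t] T by simp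
  then show ?thesis by blast
qed

lemma parseval:
  assumes h: "continuous_on UNIV h" and p: "\<forall>t. h (t + 2*pi) = h t" and h0: "integral L h = 0"
  shows "(\<lambda>n. en n h / pi) sums integral L (\<lambda>t. (h t)^2)"
  by (rule parseval_dens[OF h h0 density[OF h p]])

lemma deriv_at: "h differentiable (at x) \<Longrightarrow> (h has_real_derivative deriv h x) (at x)"
  by (simp add: DERIV_deriv_iff_real_differentiable)

lemma per_deriv:
  assumes d: "\<And>x. h differentiable (at x)" and p: "\<forall>t. h (t + 2*pi) = h t"
  shows "\<forall>t. deriv h (t + 2*pi) = deriv h t"
proof
  fix t
  have "(h has_real_derivative deriv h (t + 2*pi)) (at (t + 2*pi))" by (rule deriv_at[OF d])
  then have "((\<lambda>s. h (s + 2*pi)) has_real_derivative deriv h (t + 2*pi) * 1) (at t)"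
    by (rule DERIV_chain2) (auto intro!: derivative_eq_intros)
  moreover have "(\<lambda>s. h (s + 2*pi)) = h" using p by auto
  ultimately have "(h has_real_derivative deriv h (t + 2*pi)) (at t)" by simp
  then show "deriv h (t + 2*pi) = deriv h t" by (simp add: DERIV_imp_deriv)
qed

lemma cos_n2pi: "cos (real n * (2*pi)) = 1"
  using cos_int_2pin[of "int n"] by (simp add: mult.commute)
lemma sin_n2pi: "sin (real n * (2*pi)) = 0"
  using sin_int_2pin[of "int n"] by (simp add: mult.commute)

lemma coef_deriv:
  assumes d: "\<And>x. h differentiable (at x)" and p: "\<forall>t. h (t + 2*pi) = h t"
    and hc: "continuous_on UNIV h" and dc: "continuous_on UNIV (deriv h)"
  shows "Ac n (deriv h) = real n * Bs n h" "Bs n (deriv h) = - real n * Ac n h"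
    "integral L (deriv h) = 0"
proof -
  have p0: "h (2*pi) = h 0" using p[rule_format, of 0] by simp
  have "integral L (\<lambda>t. deriv h t * cos (real n * t) - h t * (real n * sin (real n * t)))
      = h (2*pi) * cos (real n * (2*pi)) - h 0 * cos (real n * 0)"
    by (rule ftc_real) (auto intro!: derivative_eq_intros deriv_at[OF d])
  also have "\<dots> = 0" using p0 cos_n2pi by simp
  finally have 1: "integral L (\<lambda>t. deriv h t * cos (real n * t) - h t * (real n * sin (real n * t))) = 0" .
  have "integral L (\<lambda>t. deriv h t * cos (real n * t) - h t * (real n * sin (real n * t)))
     = Ac n (deriv h) - real n * Bs n h"
    unfolding Ac_def Bs_def
    apply (subst integral_diff)
    using hc dc by (auto intro!: intL continuous_intros simp: mult.left_commute)
  then show "Ac n (deriv h) = real n * Bs n h" using 1 by simp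
  have "integral L (\<lambda>t. deriv h t * sin (real n * t) + h t * (real n * cos (real n * t)))
      = h (2*pi) * sin (real n * (2*pi)) - h 0 * sin (real n * 0)"
    by (rule ftc_real) (auto intro!: derivative_eq_intros deriv_at[OF d])
  also have "\<dots> = 0" using sin_n2pi by simp
  finally have 2: "integral L (\<lambda>t. deriv h t * sin (real n * t) + h t * (real n * cos (real n * t))) = 0" .
  have "integral L (\<lambda>t. deriv h t * sin (real n * t) + h t * (real n * cos (real n * t)))
     = Bs n (deriv h) + real n * Ac n h"
    unfolding Ac_def Bs_def
    apply (subst integral_add)
    using hc dc by (auto intro!: intL continuous_intros simp: mult.left_commute)
  then show "Bs n (deriv h) = - real n * Ac n h" using 2 by simp
  have "integral L (deriv h) = h (2*pi) - h 0"
    by (rule ftc_real) (auto intro!: deriv_at[OF d])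
  then show "integral L (deriv h) = 0" using p0 by simp
qed

lemma en_deriv:
  assumes d: "\<And>x. h differentiable (at x)" and p: "\<forall>t. h (t + 2*pi) = h t"
    and hc: "continuous_on UNIV h" and dc: "continuous_on UNIV (deriv h)"
  shows "en n (deriv h) = real n ^ 2 * en n h"
  unfolding en_def coef_deriv[OF assms] by (simp add: power2_eq_square algebra_simps)

lemma Ac_add: "continuous_on UNIV u \<Longrightarrow> continuous_on UNIV v \<Longrightarrow> Ac n (\<lambda>t. u t + v t) = Ac n u + Ac n v"
  unfolding Ac_def by (subst integral_add[symmetric]) (auto intro!: intL continuous_intros simp: distrib_right)
lemma Bs_add: "continuous_on UNIV u \<Longrightarrow> continuous_on UNIV v \<Longrightarrow> Bs n (\<lambda>t. u t + v t) = Bs n u + Bs n v"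
  unfolding Bs_def by (subst integral_add[symmetric]) (auto intro!: intL continuous_intros simp: distrib_right)

lemma nderiv_0 [simp]: "nderiv 0 f = f" by (simp add: nderiv_def)
lemma nderiv_Suc: "nderiv (Suc k) f = deriv (nderiv k f)" by (simp add: nderiv_def)

locale fsetup =
  fixes M :: nat and f :: "real \<Rightarrow> real"
  assumes C: "C_class M f" and p: "\<forall>t. f (t + 2*pi) = f t" and z: "integral L f = 0"
begin

lemma D_cont: "k \<le> M \<Longrightarrow> continuous_on UNIV (nderiv k f)"
  using C by (simp add: C_class_def)
lemma D_diff: "k < M \<Longrightarrow> nderiv k f differentiable (at x)"
  using C by (simp add: C_class_def)

lemma D_per: "k \<le> M \<Longrightarrow> \<forall>t. nderiv k f (t + 2*pi) = nderiv k f t"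
proof (induction k)
  case 0 then show ?case using p by simp
next
  case (Suc k)
  then show ?case unfolding nderiv_Suc by (intro per_deriv D_diff) auto
qed

lemma D_dc: "k < M \<Longrightarrow> continuous_on UNIV (deriv (nderiv k f))"
  using D_cont[of "Suc k"] by (simp add: nderiv_Suc)

lemma D_int0: "k \<le> M \<Longrightarrow> integral L (nderiv k f) = 0"
proof (cases k)
  case 0 then show ?thesis using z by simp
next
  case (Suc j)
  assume "k \<le> M"
  then have j: "j < M" using Suc by simp
  show ?thesis unfolding Suc nderiv_Suc
    by (rule coef_deriv(3)[OF D_diff[OF j] D_per D_cont D_dc[OF j]]) (use j in auto)
qed

lemma D_step: "k < M \<Longrightarrow> Ac n (nderiv (Suc k) f) = real n * Bs n (nderiv k f) \<and>
    Bs n (nderiv (Suc k) f) = - real n * Ac n (nderiv k f)"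
proof -
  assume j: "k < M"
  show ?thesis unfolding nderiv_Suc
    by (intro conjI coef_deriv(1,2)[OF D_diff[OF j] D_per D_cont D_dc[OF j]]) (use j in auto)
qed

lemma D_en: "k \<le> M \<Longrightarrow> en n (nderiv k f) = (real n ^ 2) ^ k * en n f"
proof (induction k)
  case 0 then show ?case by simp
next
  case (Suc k)
  have "en n (nderiv (Suc k) f) = real n ^ 2 * en n (nderiv k f)"
    using D_step[of k n] Suc.prems by (simp add: en_def power2_eq_square algebra_simps)
  then show ?case using Suc by simp
qed

lemma D_AB2: "k + 2 \<le> M \<Longrightarrow> Ac n (nderiv (k+2) f) = - (real n ^ 2) * Ac n (nderiv k f) \<and>
    Bs n (nderiv (k+2) f) = - (real n ^ 2) * Bs n (nderiv k f)"
  using D_step[of "Suc k" n] D_step[of k n] by (simp add: power2_eq_square)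

lemma energy: "k \<le> M \<Longrightarrow> (\<lambda>n. (real n ^ 2) ^ k * (en n f / pi)) sums integral L (\<lambda>t. (nderiv k f t)^2)"
  using parseval[OF D_cont D_per D_int0, of k] by (simp add: D_en)

lemma energy2:
  assumes k: "1 \<le> k" "k + 1 \<le> M"
  shows "(\<lambda>n. (real n ^ 2 - 1)^2 * (real n ^ 2) ^ (k - 1) * (en n f / pi)) sums
     integral L (\<lambda>t. (nderiv (k+1) f t + nderiv (k-1) f t)^2)"
proof -
  obtain j where j: "k = j + 1" using k by (metis add.commute le_Suc_ex)
  have kk: "k + 1 = j + 2" "k - 1 = j" using j by auto
  let ?g = "\<lambda>t. nderiv (j+2) f t + nderiv j f t"
  have c1: "continuous_on UNIV (nderiv (j+2) f)" and c2: "continuous_on UNIV (nderiv j f)"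
    using k j by (auto intro!: D_cont)
  have gc: "continuous_on UNIV ?g" using c1 c2 by (intro continuous_intros)
  have gp: "\<forall>t. ?g (t + 2*pi) = ?g t" using D_per[of "j+2"] D_per[of j] k j by auto
  have "integral L ?g = integral L (nderiv (j+2) f) + integral L (nderiv j f)"
    by (rule integral_add[OF intL[OF c1] intL[OF c2]])
  also have "\<dots> = 0" using D_int0[of "j+2"] D_int0[of j] k j by simp
  finally have g0: "integral L ?g = 0" .
  have "en n ?g = (real n ^ 2 - 1)^2 * en n (nderiv j f)" for n
    unfolding en_def Ac_add[OF c1 c2] Bs_add[OF c1 c2] using D_AB2[of j n] k j
    by (simp add: power2_eq_square algebra_simps)
  also have "\<dots> n = (real n ^ 2 - 1)^2 * (real n ^ 2) ^ j * en n f" for n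
    using D_en[of j n] k j by simp
  finally show ?thesis unfolding kk using parseval[OF gc gp g0] by (simp add: mult.assoc)
qed

lemma E0: "en 0 f = 0" using z by (simp add: en_def Ac0 Bs0)

end

lemma poly_sum_lt:
  fixes p :: "real poly"
  assumes "p = 0 \<or> degree p < d"
  shows "poly p x = (\<Sum>i<d. coeff p i * x ^ i)"
proof (cases "p = 0")
  case True then show ?thesis by simp
next
  case False
  then have dd: "degree p < d" using assms by simp
  have "poly p x = (\<Sum>i\<le>degree p. coeff p i * x ^ i)" by (rule poly_altdef)
  also have "\<dots> = (\<Sum>i<d. coeff p i * x ^ i)"
  proof (rule sum.mono_neutral_left)
    show "\<forall>i\<in>{..<d} - {..degree p}. coeff p i * x ^ i = 0"
    proof
      fix i assume "i \<in> {..<d} - {..degree p}"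
      then have "degree p < i" by auto
      then show "coeff p i * x ^ i = 0" using coeff_eq_0[of p i] by simp
    qed
  qed (use dd in auto)
  finally show ?thesis .
qed


lemma deg_cpoly: "degree (cpoly m) \<le> m"
proof -
  have "degree (cpoly m) \<le> sum (degree \<circ> (\<lambda>j. [:- ((real j)^2), 1:])) {1..m}"
    unfolding cpoly_def by (rule degree_prod_sum_le) simp
  also have "\<dots> = m" by (simp add: o_def)
  finally show ?thesis .
qed

lemma deg_Ppoly: "degree (Ppoly m) \<le> m - 1"
proof -
  have "degree (Ppoly m) \<le> sum (degree \<circ> (\<lambda>j. [:- ((real j)^2), 1:])) {2..m}"
    unfolding Ppoly_def by (rule degree_prod_sum_le) simp
  also have "\<dots> = m - 1" by (simp add: o_def)
  finally show ?thesis .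
qed

lemma cpoly_P: "m \<ge> 1 \<Longrightarrow> cpoly m = [:-1, 1:] * Ppoly m"
proof -
  assume m: "m \<ge> 1"
  have "{1..m} = insert 1 {2..m}" using m by auto
  then show ?thesis unfolding cpoly_def Ppoly_def by simp
qed

lemma Spoly_eq: "Ppoly m = [:poly (Ppoly m) 1:] + [:-1, 1:] * Spoly m"
proof -
  have "[:-1, 1:] dvd (Ppoly m - [:poly (Ppoly m) 1:])"
    using poly_eq_0_iff_dvd[of "Ppoly m - [:poly (Ppoly m) 1:]" 1] by simp
  then have "Spoly m * [:-1, 1:] = Ppoly m - [:poly (Ppoly m) 1:]"
    unfolding Spoly_def by (rule dvd_div_mult_self)
  then show ?thesis by (simp add: algebra_simps)
qed

lemma deg_Spoly:
  assumes m: "m \<ge> 1"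
  shows "Spoly m = 0 \<or> degree (Spoly m) < m - 1"
proof (cases "Spoly m = 0")
  case True then show ?thesis by simp
next
  case False
  have e: "[:-1, 1:] * Spoly m = Ppoly m - [:poly (Ppoly m) 1:]"
    using Spoly_eq[of m] by (simp add: algebra_simps)
  have "degree ([:-1, 1:] * Spoly m) = 1 + degree (Spoly m)"
    using False by (subst degree_mult_eq) auto
  moreover have "degree (Ppoly m - [:poly (Ppoly m) 1:]) \<le> m - 1"
    using degree_diff_le_max[of "Ppoly m" "[:poly (Ppoly m) 1:]"] deg_Ppoly[of m] by simp
  ultimately show ?thesis using e m by simp
qed

lemma sum_shift1: "(\<Sum>k\<in>{1..nn::nat}. g (k - 1)) = (\<Sum>i<nn. g i)"
proof (induction nn)
  case 0 then show ?case by simp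
next
  case (Suc nn)
  have "{1..Suc nn} = insert (Suc nn) {1..nn}" by auto
  then show ?case using Suc by (simp add: add.commute)
qed

lemma PA: "poly (cpoly m) x = (\<Sum>k\<le>m. cc m k * x ^ k)"
  unfolding cc_def using poly_sum_lt[of "cpoly m" "Suc m" x] deg_cpoly[of m]
  by (simp add: lessThan_Suc_atMost)

lemma PB: "m \<ge> 1 \<Longrightarrow> poly (Ppoly m) x = (\<Sum>k<m. lam m k * x ^ k)"
proof -
  assume m: "m \<ge> 1"
  have "degree (Ppoly m) < m" using deg_Ppoly[of m] m by linarith
  then show ?thesis unfolding lam_def using poly_sum_lt[of "Ppoly m" m x] by simp
qed

lemma PC: "m \<ge> 1 \<Longrightarrow> poly (cpoly m) x = (x - 1) * poly (Ppoly m) x"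
  by (simp add: cpoly_P algebra_simps)

lemma PD: 
  assumes m: "m \<ge> 1"
  shows "poly (Ppoly m) x = SS m 0 + (x - 1) * (\<Sum>k\<in>{1..m-1}. SS m k * x ^ (k - 1))"
proof -
  have "(\<Sum>k\<in>{1..m-1}. SS m k * x ^ (k - 1)) = (\<Sum>k\<in>{1..m-1}. coeff (Spoly m) (k - 1) * x ^ (k - 1))"
    by (rule sum.cong) (auto simp: SS_def)
  also have "\<dots> = (\<Sum>i<m-1. coeff (Spoly m) i * x ^ i)" by (rule sum_shift1)
  also have "\<dots> = poly (Spoly m) x" using poly_sum_lt[OF deg_Spoly[OF m]] by simp
  finally have "(\<Sum>k\<in>{1..m-1}. SS m k * x ^ (k - 1)) = poly (Spoly m) x" .
  moreover have "poly (Ppoly m) x = poly (Ppoly m) 1 + (x - 1) * poly (Spoly m) x"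
    by (subst Spoly_eq) (simp add: left_diff_distrib)
  ultimately show ?thesis by (simp add: SS_def algebra_simps)
qed

lemma sum_split0:
  assumes m: "m \<ge> 1"
  shows "(\<Sum>k<m. g k * (y::real) ^ k) = g 0 + y * (\<Sum>k\<in>{1..m-1}. g k * y ^ (k - 1))"
proof -
  have "{..<m} = insert 0 {1..m-1}" using m by auto
  then have "(\<Sum>k<m. g k * y ^ k) = g 0 + (\<Sum>k\<in>{1..m-1}. g k * y ^ k)" by simp
  also have "(\<Sum>k\<in>{1..m-1}. g k * y ^ k) = (\<Sum>k\<in>{1..m-1}. y * (g k * y ^ (k - 1)))"
    by (rule sum.cong) (auto simp: power_eq_if)
  finally show ?thesis by (simp add: sum_distrib_left)
qed

lemma TA: "(\<Sum>k\<le>m. cc m k * (y ^ k * E)) = poly (cpoly m) y * E"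
  by (simp add: PA sum_distrib_right mult.assoc)

lemma TA': "(\<Sum>k\<le>m. cc m k * (y ^ (k+1) * E)) = y * (poly (cpoly m) y * E)"
  by (simp add: PA sum_distrib_right sum_distrib_left algebra_simps)

lemma TB: "m \<ge> 1 \<Longrightarrow> (\<Sum>k<m. lam m k * (y ^ (k+1) * E - y ^ k * E)) = poly (cpoly m) y * E"
  by (simp add: PC PB sum_distrib_right sum_distrib_left algebra_simps)

lemma TB': "m \<ge> 1 \<Longrightarrow> (\<Sum>k<m. lam m k * (y ^ (k+2) * E - y ^ (k+1) * E)) = y * (poly (cpoly m) y * E)"
  by (simp add: PC PB sum_distrib_right sum_distrib_left algebra_simps power2_eq_square)

lemma algC: "(c::real) = (y - 1) * P \<Longrightarrow> P = s + (y - 1) * Q \<Longrightarrow>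
  s * (y ^ 1 * E - y ^ 0 * E) + (y - 1)^2 * E * Q = c * E"
proof -
  assume a: "c = (y - 1) * P" "P = s + (y - 1) * Q"
  show ?thesis unfolding a(1) a(2) by (simp add: power2_eq_square algebra_simps)
qed

lemma algC': "(c::real) = (y - 1) * P \<Longrightarrow> P = s + (y - 1) * Q \<Longrightarrow>
  s * (y ^ 1 * E - y ^ 0 * E) + (y - 1)^2 * E * (s + y * Q) = y * (c * E)"
proof -
  assume a: "c = (y - 1) * P" "P = s + (y - 1) * Q"
  show ?thesis unfolding a(1) a(2) by (simp add: power2_eq_square algebra_simps)
qed

lemma TC: "m \<ge> 1 \<Longrightarrow> SS m 0 * (y ^ 1 * E - y ^ 0 * E) + (\<Sum>k\<in>{1..m-1}. SS m k * ((y - 1)^2 * y ^ (k - 1) * E))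
   = poly (cpoly m) y * E"
proof -
  assume m: "m \<ge> 1"
  have "(\<Sum>k\<in>{1..m-1}. SS m k * ((y - 1)^2 * y ^ (k - 1) * E)) = (y - 1)^2 * E * (\<Sum>k\<in>{1..m-1}. SS m k * y ^ (k - 1))"
    by (simp add: sum_distrib_left algebra_simps)
  then show ?thesis using algC[OF PC[OF m, of y] PD[OF m, of y], of E] by simp
qed

lemma TC': "m \<ge> 1 \<Longrightarrow> SS m 0 * (y ^ 1 * E - y ^ 0 * E) + (\<Sum>k<m. SS m k * ((y - 1)^2 * y ^ k * E))
   = y * (poly (cpoly m) y * E)"
proof -
  assume m: "m \<ge> 1"
  have "(\<Sum>k<m. SS m k * ((y - 1)^2 * y ^ k * E)) = (y - 1)^2 * E * (\<Sum>k<m. SS m k * y ^ k)"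
    by (simp add: sum_distrib_left algebra_simps)
  also have "\<dots> = (y - 1)^2 * E * (SS m 0 + y * (\<Sum>k\<in>{1..m-1}. SS m k * y ^ (k - 1)))"
    by (simp add: sum_split0[OF m])
  finally show ?thesis using algC'[OF PC[OF m, of y] PD[OF m, of y], of E] by simp
qed

lemma cpoly_n: "poly (cpoly m) (real n ^ 2) = (\<Prod>j\<in>{1..m}. real n ^ 2 - real j ^ 2)"
  by (simp add: cpoly_def poly_prod)

lemma cpoly_sign: "n \<ge> 1 \<Longrightarrow> 0 \<le> poly (cpoly m) (real n ^ 2) \<and> (poly (cpoly m) (real n ^ 2) = 0 \<or> (real m + 1)^2 \<le> real n ^ 2)"
proof -
  assume n: "n \<ge> 1"
  show ?thesis
  proof (cases "n \<le> m")
    case True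
    then have "poly (cpoly m) (real n ^ 2) = 0" unfolding cpoly_n
      using n by (intro prod_zero) auto
    then show ?thesis by simp
  next
    case False
    then have "0 < poly (cpoly m) (real n ^ 2)" unfolding cpoly_n
      by (intro prod_pos) (auto intro!: power_strict_mono)
    moreover have "(real m + 1)^2 \<le> real n ^ 2" using False by (intro power_mono) auto
    ultimately show ?thesis by simp
  qed
qed

lemma final_ineq:
  fixes G :: "nat \<Rightarrow> real"
  assumes s1: "G sums S1" and s2: "(\<lambda>n. real n ^ 2 * G n) sums S2"
    and nn: "\<And>n. 0 \<le> G n" and cmp: "\<And>n. G n = 0 \<or> (real m + 1)^2 \<le> real n ^ 2"
  shows "0 \<le> S1 \<and> S1 \<le> 1 / (real m + 1)^2 * S2"
proof
  show "0 \<le> S1" using sums_le[of "\<lambda>_. 0" G 0 S1] s1 nn by simp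
  have "(\<lambda>n. (real m + 1)^2 * G n) sums ((real m + 1)^2 * S1)" by (rule sums_mult[OF s1])
  then have "(real m + 1)^2 * S1 \<le> S2"
  proof (rule sums_le[rotated])
    show "(\<lambda>n. real n ^ 2 * G n) sums S2" by (rule s2)
    fix n show "(real m + 1)^2 * G n \<le> real n ^ 2 * G n"
      using cmp[of n] nn[of n] by (auto intro: mult_right_mono)
  qed
  then show "S1 \<le> 1 / (real m + 1)^2 * S2" by (simp add: field_simps)
qed

lemma sums_nonneg0: "(G::nat \<Rightarrow> real) sums S \<Longrightarrow> (\<And>n. 0 \<le> G n) \<Longrightarrow> 0 \<le> S"
  using sums_le[of "\<lambda>_. 0" G 0 S] by simp

theorem proposition2p2:
  fixes m :: nat and f :: "real \<Rightarrow> real"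
  assumes m: "m \<ge> 1"
    and smooth: "C_class m f"
    and periodic: "\<forall>t. f (t + 2 * pi) = f t"
    and mean0: "integral {0..2*pi} f = 0"
  defines "I \<equiv> \<lambda>g. integral {0..2*pi} g"
  shows
    "(0 \<le> (\<Sum>k\<le>m. cc m k * I (\<lambda>t. (nderiv k f t)^2))
      \<and> 0 \<le> (\<Sum>k<m. lam m k * I (\<lambda>t. (nderiv (k+1) f t)^2 - (nderiv k f t)^2))
      \<and> 0 \<le> SS m 0 * I (\<lambda>t. (nderiv 1 f t)^2 - (f t)^2)
             + (\<Sum>k\<in>{1..m-1}. SS m k * I (\<lambda>t. (nderiv (k+1) f t + nderiv (k-1) f t)^2)))
     \<and>
     (C_class (m+1) f \<longrightarrow>
        (\<Sum>k\<le>m. cc m k * I (\<lambda>t. (nderiv k f t)^2))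
          \<le> 1 / (real m + 1)^2 * (\<Sum>k\<le>m. cc m k * I (\<lambda>t. (nderiv (k+1) f t)^2))
      \<and> (\<Sum>k<m. lam m k * I (\<lambda>t. (nderiv (k+1) f t)^2 - (nderiv k f t)^2))
          \<le> 1 / (real m + 1)^2 *
             (\<Sum>k<m. lam m k * I (\<lambda>t. (nderiv (k+2) f t)^2 - (nderiv (k+1) f t)^2))
      \<and> SS m 0 * I (\<lambda>t. (nderiv 1 f t)^2 - (f t)^2)
             + (\<Sum>k\<in>{1..m-1}. SS m k * I (\<lambda>t. (nderiv (k+1) f t + nderiv (k-1) f t)^2))
          \<le> 1 / (real m + 1)^2 *
             (SS m 0 * I (\<lambda>t. (nderiv 1 f t)^2 - (f t)^2)
              + (\<Sum>k<m. SS m k * I (\<lambda>t. (nderiv (k+2) f t + nderiv k f t)^2))))"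
proof -
  interpret fm: fsetup m f using smooth periodic mean0 by unfold_locales auto
  define G where "G n = poly (cpoly m) (real n ^ 2) * (en n f / pi)" for n
  have Gnn: "0 \<le> G n" and Gc: "G n = 0 \<or> (real m + 1)^2 \<le> real n ^ 2" for n
  proof -
    have "0 \<le> G n \<and> (G n = 0 \<or> (real m + 1)^2 \<le> real n ^ 2)"
    proof (cases "n = 0")
      case True then show ?thesis by (simp add: G_def fm.E0)
    next
      case False
      then have "n \<ge> 1" by simp
      from cpoly_sign[OF this, of m] show ?thesis
        unfolding G_def using en_nonneg[of n f] by auto
    qed
    then show "0 \<le> G n" "G n = 0 \<or> (real m + 1)^2 \<le> real n ^ 2" by auto
  qed
  have Id: "\<And>u v :: real \<Rightarrow> real. continuous_on UNIV u \<Longrightarrow> continuous_on UNIV v \<Longrightarrow>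
      integral L (\<lambda>t. (u t)^2 - (v t)^2) = integral L (\<lambda>t. (u t)^2) - integral L (\<lambda>t. (v t)^2)"
    by (rule integral_diff) (auto intro!: intL continuous_intros)
  have "(\<lambda>n. \<Sum>k\<le>m. cc m k * ((real n ^ 2) ^ k * (en n f / pi))) sums
      (\<Sum>k\<le>m. cc m k * integral L (\<lambda>t. (nderiv k f t)^2))"
    by (intro sums_sum sums_mult fm.energy) auto
  then have a1: "G sums (\<Sum>k\<le>m. cc m k * integral L (\<lambda>t. (nderiv k f t)^2))"
    unfolding TA G_def .
  have "(\<lambda>n. \<Sum>k<m. lam m k * ((real n ^ 2) ^ (k+1) * (en n f / pi) - (real n ^ 2) ^ k * (en n f / pi))) sums
      (\<Sum>k<m. lam m k * (integral L (\<lambda>t. (nderiv (k+1) f t)^2) - integral L (\<lambda>t. (nderiv k f t)^2)))"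
    by (intro sums_sum sums_mult sums_diff fm.energy) auto
  moreover have "(\<Sum>k<m. lam m k * (integral L (\<lambda>t. (nderiv (k+1) f t)^2) - integral L (\<lambda>t. (nderiv k f t)^2)))
     = (\<Sum>k<m. lam m k * integral L (\<lambda>t. (nderiv (k+1) f t)^2 - (nderiv k f t)^2))"
    by (intro sum.cong refl arg_cong[where f="\<lambda>x. lam m _ * x"] Id[symmetric] fm.D_cont) auto
  ultimately have b1: "G sums (\<Sum>k<m. lam m k * integral L (\<lambda>t. (nderiv (k+1) f t)^2 - (nderiv k f t)^2))"
    unfolding TB[OF m] G_def by simp
  have "(\<lambda>n. SS m 0 * ((real n ^ 2) ^ 1 * (en n f / pi) - (real n ^ 2) ^ 0 * (en n f / pi))
       + (\<Sum>k\<in>{1..m-1}. SS m k * ((real n ^ 2 - 1)^2 * (real n ^ 2) ^ (k - 1) * (en n f / pi)))) sums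
     (SS m 0 * (integral L (\<lambda>t. (nderiv 1 f t)^2) - integral L (\<lambda>t. (nderiv 0 f t)^2))
      + (\<Sum>k\<in>{1..m-1}. SS m k * integral L (\<lambda>t. (nderiv (k+1) f t + nderiv (k-1) f t)^2)))"
    using m by (intro sums_add sums_mult sums_diff fm.energy sums_sum fm.energy2) auto
  moreover have "integral L (\<lambda>t. (nderiv 1 f t)^2) - integral L (\<lambda>t. (nderiv 0 f t)^2)
      = integral L (\<lambda>t. (nderiv 1 f t)^2 - (f t)^2)"
    using Id[OF fm.D_cont[of 1] fm.D_cont[of 0]] m by simp
  ultimately have c1: "G sums (SS m 0 * integral L (\<lambda>t. (nderiv 1 f t)^2 - (f t)^2)
      + (\<Sum>k\<in>{1..m-1}. SS m k * integral L (\<lambda>t. (nderiv (k+1) f t + nderiv (k-1) f t)^2)))"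
    unfolding TC[OF m] G_def by simp
  have low: "0 \<le> (\<Sum>k\<le>m. cc m k * I (\<lambda>t. (nderiv k f t)^2))
      \<and> 0 \<le> (\<Sum>k<m. lam m k * I (\<lambda>t. (nderiv (k+1) f t)^2 - (nderiv k f t)^2))
      \<and> 0 \<le> SS m 0 * I (\<lambda>t. (nderiv 1 f t)^2 - (f t)^2)
             + (\<Sum>k\<in>{1..m-1}. SS m k * I (\<lambda>t. (nderiv (k+1) f t + nderiv (k-1) f t)^2))"
    unfolding I_def using sums_nonneg0[OF a1 Gnn] sums_nonneg0[OF b1 Gnn] sums_nonneg0[OF c1 Gnn] by simp
  have up: "C_class (m+1) f \<longrightarrow>
        (\<Sum>k\<le>m. cc m k * I (\<lambda>t. (nderiv k f t)^2))
          \<le> 1 / (real m + 1)^2 * (\<Sum>k\<le>m. cc m k * I (\<lambda>t. (nderiv (k+1) f t)^2))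
      \<and> (\<Sum>k<m. lam m k * I (\<lambda>t. (nderiv (k+1) f t)^2 - (nderiv k f t)^2))
          \<le> 1 / (real m + 1)^2 *
             (\<Sum>k<m. lam m k * I (\<lambda>t. (nderiv (k+2) f t)^2 - (nderiv (k+1) f t)^2))
      \<and> SS m 0 * I (\<lambda>t. (nderiv 1 f t)^2 - (f t)^2)
             + (\<Sum>k\<in>{1..m-1}. SS m k * I (\<lambda>t. (nderiv (k+1) f t + nderiv (k-1) f t)^2))
          \<le> 1 / (real m + 1)^2 *
             (SS m 0 * I (\<lambda>t. (nderiv 1 f t)^2 - (f t)^2)
              + (\<Sum>k<m. SS m k * I (\<lambda>t. (nderiv (k+2) f t + nderiv k f t)^2)))"
  proof
    assume C1: "C_class (m+1) f"
    interpret fm1: fsetup "m+1" f using C1 periodic mean0 by unfold_locales auto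
    have "(\<lambda>n. \<Sum>k\<le>m. cc m k * ((real n ^ 2) ^ (k+1) * (en n f / pi))) sums
        (\<Sum>k\<le>m. cc m k * integral L (\<lambda>t. (nderiv (k+1) f t)^2))"
      by (intro sums_sum sums_mult fm1.energy) auto
    then have a2: "(\<lambda>n. real n ^ 2 * G n) sums (\<Sum>k\<le>m. cc m k * integral L (\<lambda>t. (nderiv (k+1) f t)^2))"
      unfolding TA' G_def .
    have "(\<lambda>n. \<Sum>k<m. lam m k * ((real n ^ 2) ^ (k+2) * (en n f / pi) - (real n ^ 2) ^ (k+1) * (en n f / pi))) sums
        (\<Sum>k<m. lam m k * (integral L (\<lambda>t. (nderiv (k+2) f t)^2) - integral L (\<lambda>t. (nderiv (k+1) f t)^2)))"
      by (intro sums_sum sums_mult sums_diff fm1.energy) auto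
    moreover have "(\<Sum>k<m. lam m k * (integral L (\<lambda>t. (nderiv (k+2) f t)^2) - integral L (\<lambda>t. (nderiv (k+1) f t)^2)))
       = (\<Sum>k<m. lam m k * integral L (\<lambda>t. (nderiv (k+2) f t)^2 - (nderiv (k+1) f t)^2))"
      by (intro sum.cong refl arg_cong[where f="\<lambda>x. lam m _ * x"] Id[symmetric] fm1.D_cont) auto
    ultimately have b2: "(\<lambda>n. real n ^ 2 * G n) sums (\<Sum>k<m. lam m k * integral L (\<lambda>t. (nderiv (k+2) f t)^2 - (nderiv (k+1) f t)^2))"
      unfolding TB'[OF m] G_def by simp
    have e2: "(\<lambda>n. (real n ^ 2 - 1)^2 * (real n ^ 2) ^ k * (en n f / pi)) sums
        integral L (\<lambda>t. (nderiv (k+2) f t + nderiv k f t)^2)" if "k < m" for k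
      using fm1.energy2[of "k+1"] that by (simp add: numeral_2_eq_2)
    have "(\<lambda>n. SS m 0 * ((real n ^ 2) ^ 1 * (en n f / pi) - (real n ^ 2) ^ 0 * (en n f / pi))
         + (\<Sum>k<m. SS m k * ((real n ^ 2 - 1)^2 * (real n ^ 2) ^ k * (en n f / pi)))) sums
       (SS m 0 * (integral L (\<lambda>t. (nderiv 1 f t)^2) - integral L (\<lambda>t. (nderiv 0 f t)^2))
        + (\<Sum>k<m. SS m k * integral L (\<lambda>t. (nderiv (k+2) f t + nderiv k f t)^2)))"
      using m by (intro sums_add sums_mult sums_diff fm.energy sums_sum e2) auto
    moreover have "integral L (\<lambda>t. (nderiv 1 f t)^2) - integral L (\<lambda>t. (nderiv 0 f t)^2)
        = integral L (\<lambda>t. (nderiv 1 f t)^2 - (f t)^2)"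
      using Id[OF fm.D_cont[of 1] fm.D_cont[of 0]] m by simp
    ultimately have c2: "(\<lambda>n. real n ^ 2 * G n) sums (SS m 0 * integral L (\<lambda>t. (nderiv 1 f t)^2 - (f t)^2)
        + (\<Sum>k<m. SS m k * integral L (\<lambda>t. (nderiv (k+2) f t + nderiv k f t)^2)))"
      unfolding TC'[OF m] G_def by simp
    show "(\<Sum>k\<le>m. cc m k * I (\<lambda>t. (nderiv k f t)^2))
          \<le> 1 / (real m + 1)^2 * (\<Sum>k\<le>m. cc m k * I (\<lambda>t. (nderiv (k+1) f t)^2))
      \<and> (\<Sum>k<m. lam m k * I (\<lambda>t. (nderiv (k+1) f t)^2 - (nderiv k f t)^2))
          \<le> 1 / (real m + 1)^2 *
             (\<Sum>k<m. lam m k * I (\<lambda>t. (nderiv (k+2) f t)^2 - (nderiv (k+1) f t)^2))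
      \<and> SS m 0 * I (\<lambda>t. (nderiv 1 f t)^2 - (f t)^2)
             + (\<Sum>k\<in>{1..m-1}. SS m k * I (\<lambda>t. (nderiv (k+1) f t + nderiv (k-1) f t)^2))
          \<le> 1 / (real m + 1)^2 *
             (SS m 0 * I (\<lambda>t. (nderiv 1 f t)^2 - (f t)^2)
              + (\<Sum>k<m. SS m k * I (\<lambda>t. (nderiv (k+2) f t + nderiv k f t)^2)))"
      unfolding I_def using final_ineq[OF a1 a2 Gnn Gc] final_ineq[OF b1 b2 Gnn Gc] final_ineq[OF c1 c2 Gnn Gc]
      by blast
  qed
  show ?thesis using low up by blast
qed


end
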